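(* Let $M^4$ be a smooth $4$-manifold, $\sigma$ a smooth non-constant function on $M^4$ with $\sigma_i:=\partial\sigma/\partial x^i$, and $h_{11}(t)>0$ a Riemannian metric on $\mathbb{R}$ with $h^{11}=1/h_{11}$ and $\text{\textsc{k}}^1_{11}=\frac{h^{11}}{2}\frac{dh_{11}}{dt}$. On the domain of $J^{1*}(\mathbb{R},M^4)$ (coordinates $(t,x^i,p^1_i)$) where $\mathcal{P}^{1111}:=p^1_1p^1_2p^1_3p^1_4>0$, consider $\overset{*}{H}=4e^{-2\sigma(x)}h_{11}(t)[\mathcal{P}^{1111}]^{1/2}$. Then the Cartan canonical $N$-linear connection of $\overset{*}{H}$ has adapted components (no sum over $i,j,k$) $$C\Gamma(N)=\left(\text{\textsc{k}}^1_{11},\ A^i_{j1}=0,\ H^i_{jk}=4\delta^i_j\delta^i_k\sigma_i,\ C^{j(k)}_{i(1)}=\mathsf{C}^{jk}_i\cdot\frac{p^1_i}{p^1_jp^1_k}\right),$$ where $\mathsf{C}^{jk}_i=\frac{1-2\delta^{jk}-2\delta^j_i-2\delta^k_i+8\delta^j_i\delta^k_i}{8}$, i.e. $\mathsf{C}^{jk}_i=\frac18$ if $i,j,k$ are pairwise distinct, $-\frac18$ if exactly two of $i,j,k$ coincide, and $\frac38$ if $i=j=k$.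
   Context: The fundamental metrical d-tensor is $\overset{*}{g}{}^{ij}=\frac{h^{11}}{2}\frac{\partial^2\overset{*}{H}}{\partial p^1_i\partial p^1_j}$, with inverse matrix $(\overset{*}{g}_{ij})$. The canonical nonlinear connection has components $\underset{1}{N}{}^{(1)}_{(i)1}=\text{\textsc{k}}^1_{11}p^1_i$ and $\underset{2}{N}{}^{(1)}_{(i)j}=-4\sigma_ip^1_i\delta_{ij}$ (no sum), and produces the adapted vector fields $\frac{\delta}{\delta t}=\frac{\partial}{\partial t}-\text{\textsc{k}}^1_{11}p^1_r\frac{\partial}{\partial p^1_r}$, $\frac{\delta}{\delta x^i}=\frac{\partial}{\partial x^i}+4\sigma_ip^1_i\frac{\partial}{\partial p^1_i}$ (no sum over $i$). The Cartan canonical connection components are defined by (summation over repeated indices) $A^i_{j1}=\frac{\overset{*}{g}{}^{il}}{2}\frac{\delta\overset{*}{g}_{lj}}{\delta t}$, $H^i_{jk}=\frac{\overset{*}{g}{}^{ir}}{2}\left(\frac{\delta\overset{*}{g}_{jr}}{\delta x^k}+\frac{\delta\overset{*}{g}_{kr}}{\delta x^j}-\frac{\delta\overset{*}{g}_{jk}}{\delta x^r}\right)$, $C^{j(k)}_{i(1)}=-\frac{\overset{*}{g}_{ir}}{2}\left(\frac{\partial\overset{*}{g}{}^{jr}}{\partial p^1_k}+\frac{\partial\overset{*}{g}{}^{kr}}{\partial p^1_j}-\frac{\partial\overset{*}{g}{}^{jk}}{\partial p^1_r}\right)$, together with the component $\text{\textsc{k}}^1_{11}$ on the time direction. *)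

theory Defs
  imports "HOL-Analysis.Analysis"
begin

text \<open>Local coordinates on J^{1*}(R,M^4): (t, x, p) with x = (x^1..x^4), p = (p^1_1..p^1_4),
  both in real^4.  Functions on the jet space have type real => real^4 => real^4 => real.\<close>

type_synonym jfun = "real \<Rightarrow> real^4 \<Rightarrow> real^4 \<Rightarrow> real"

definition pdiff :: "'n::finite \<Rightarrow> (real^'n \<Rightarrow> real) \<Rightarrow> real^'n \<Rightarrow> real" where
  "pdiff i f x = deriv (\<lambda>s. f (x + s *\<^sub>R axis i 1)) 0"

definition smooth_on :: "(real^'n::finite) set \<Rightarrow> (real^'n \<Rightarrow> real) \<Rightarrow> bool" where
  "smooth_on U f \<longleftrightarrow> (\<forall>ks. (fold pdiff ks f) differentiable_on U)"

definition smooth_real :: "(real \<Rightarrow> real) \<Rightarrow> bool" where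
  "smooth_real h \<longleftrightarrow> (\<forall>n. ((deriv ^^ n) h) differentiable_on UNIV)"

definition d_t :: "jfun \<Rightarrow> jfun" where
  "d_t F t x p = deriv (\<lambda>s. F s x p) t"
definition d_x :: "4 \<Rightarrow> jfun \<Rightarrow> jfun" where
  "d_x i F t x p = deriv (\<lambda>s. F t (x + s *\<^sub>R axis i 1) p) 0"
definition d_p :: "4 \<Rightarrow> jfun \<Rightarrow> jfun" where
  "d_p i F t x p = deriv (\<lambda>s. F t x (p + s *\<^sub>R axis i 1)) 0"

definition kappa :: "(real \<Rightarrow> real) \<Rightarrow> real \<Rightarrow> real" where
  "kappa h t = (1 / h t) / 2 * deriv h t"

definition Hstar :: "(real^4 \<Rightarrow> real) \<Rightarrow> (real \<Rightarrow> real) \<Rightarrow> jfun" where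
  "Hstar \<sigma> h t x p = 4 * exp (-2 * \<sigma> x) * h t * sqrt (p$1 * p$2 * p$3 * p$4)"

definition g_up :: "(real \<Rightarrow> real) \<Rightarrow> jfun \<Rightarrow> real \<Rightarrow> real^4 \<Rightarrow> real^4 \<Rightarrow> real^4^4" where
  "g_up h H t x p = (\<chi> i j. (1 / h t) / 2 * d_p i (d_p j H) t x p)"
definition g_dn :: "(real \<Rightarrow> real) \<Rightarrow> jfun \<Rightarrow> real \<Rightarrow> real^4 \<Rightarrow> real^4 \<Rightarrow> real^4^4" where
  "g_dn h H t x p = matrix_inv (g_up h H t x p)"

text \<open>Adapted vector fields of the canonical nonlinear connection
  N1_(i)1 = kappa p_i, N2_(i)j = -4 sigma_i p_i delta_ij.\<close>
definition delta_t :: "(real \<Rightarrow> real) \<Rightarrow> jfun \<Rightarrow> jfun" where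
  "delta_t h F t x p = d_t F t x p - kappa h t * (\<Sum>r\<in>UNIV. p$r * d_p r F t x p)"
definition delta_x :: "(real^4 \<Rightarrow> real) \<Rightarrow> 4 \<Rightarrow> jfun \<Rightarrow> jfun" where
  "delta_x \<sigma> i F t x p = d_x i F t x p + 4 * pdiff i \<sigma> x * p$i * d_p i F t x p"

definition cartan_A :: "(real^4 \<Rightarrow> real) \<Rightarrow> (real \<Rightarrow> real) \<Rightarrow> jfun \<Rightarrow> 4 \<Rightarrow> 4 \<Rightarrow> jfun" where
  "cartan_A \<sigma> h H i j t x p =
     (\<Sum>l\<in>UNIV. g_up h H t x p $ i $ l / 2 *
        delta_t h (\<lambda>t' x' p'. g_dn h H t' x' p' $ l $ j) t x p)"

definition cartan_H :: "(real^4 \<Rightarrow> real) \<Rightarrow> (real \<Rightarrow> real) \<Rightarrow> jfun \<Rightarrow> 4 \<Rightarrow> 4 \<Rightarrow> 4 \<Rightarrow> jfun" where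
  "cartan_H \<sigma> h H i j k t x p =
     (\<Sum>r\<in>UNIV. g_up h H t x p $ i $ r / 2 *
        ( delta_x \<sigma> k (\<lambda>t' x' p'. g_dn h H t' x' p' $ j $ r) t x p
        + delta_x \<sigma> j (\<lambda>t' x' p'. g_dn h H t' x' p' $ k $ r) t x p
        - delta_x \<sigma> r (\<lambda>t' x' p'. g_dn h H t' x' p' $ j $ k) t x p))"

text \<open>cartan_C h H i j k = C^{j(k)}_{i(1)}.\<close>
definition cartan_C :: "(real \<Rightarrow> real) \<Rightarrow> jfun \<Rightarrow> 4 \<Rightarrow> 4 \<Rightarrow> 4 \<Rightarrow> jfun" where
  "cartan_C h H i j k t x p =
     - (\<Sum>r\<in>UNIV. g_dn h H t x p $ i $ r / 2 *
        ( d_p k (\<lambda>t' x' p'. g_up h H t' x' p' $ j $ r) t x p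
        + d_p j (\<lambda>t' x' p'. g_up h H t' x' p' $ k $ r) t x p
        - d_p r (\<lambda>t' x' p'. g_up h H t' x' p' $ j $ k) t x p))"

definition kdelta :: "4 \<Rightarrow> 4 \<Rightarrow> real" where
  "kdelta a b = (if a = b then 1 else 0)"

definition Cconst :: "4 \<Rightarrow> 4 \<Rightarrow> 4 \<Rightarrow> real" where
  "Cconst i j k = (1 - 2 * kdelta j k - 2 * kdelta j i - 2 * kdelta k i
                   + 8 * kdelta j i * kdelta k i) / 8"

end

theory Submission
  imports Defs
begin

definition PP :: "real^4 \<Rightarrow> real" where "PP p = p$1 * p$2 * p$3 * p$4"

lemma axis_comp: "(p + s *\<^sub>R axis k (1::real)) $ m = p$m + s * kdelta m k"
  by (simp add: axis_def kdelta_def)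

lemma PP_nz: "PP p > 0 \<Longrightarrow> p$m \<noteq> 0"
  using exhaust_4[of m] by (auto simp: PP_def)

lemma PP_line: "p$k \<noteq> 0 \<Longrightarrow> PP (p + s *\<^sub>R axis k (1::real)) = PP p * (1 + s / p$k)"
  unfolding PP_def axis_comp using exhaust_4[of k] by (auto simp: kdelta_def field_simps)

lemma deriv_local:
  assumes "open S" "(0::real) \<in> S" "\<And>s. s \<in> S \<Longrightarrow> f s = g s" "(g has_real_derivative D) (at 0)"
  shows "deriv f 0 = D"
  by (rule DERIV_imp_deriv, rule has_field_derivative_transform_within_open[OF assms(4,1,2)])
     (simp add: assms(3))

lemma dp_local:
  assumes "PP p > 0" "\<And>q. PP q > 0 \<Longrightarrow> F t x q = G q"
    "((\<lambda>s. G (p + s *\<^sub>R axis k 1)) has_real_derivative D) (at 0)"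
  shows "d_p k F t x p = D"
proof -
  let ?S = "{s. 0 < PP p * (1 + s / p$k)}"
  have "open ?S" using PP_nz[OF assms(1)] by (intro open_Collect_less continuous_intros) auto
  moreover have "0 \<in> ?S" using assms(1) by simp
  moreover have "F t x (p + s *\<^sub>R axis k 1) = G (p + s *\<^sub>R axis k 1)" if "s \<in> ?S" for s
    using that assms(2)[of "p + s *\<^sub>R axis k 1"] PP_line[OF PP_nz[OF assms(1)]] by simp
  ultimately show ?thesis unfolding d_p_def by (rule deriv_local[OF _ _ _ assms(3)])
qed

lemma Hstar_PP: "Hstar \<sigma> h t x p = 4 * exp (-2 * \<sigma> x) * h t * sqrt (PP p)"
  by (simp add: Hstar_def PP_def)

lemma sqrt_sq: "PP p > 0 \<Longrightarrow> sqrt (PP p) * sqrt (PP p) = PP p"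
  by simp

lemma F1:
  assumes "PP p > 0"
  shows "d_p j (Hstar \<sigma> h) t x p = 4 * exp (-2 * \<sigma> x) * h t * sqrt (PP p) / (2 * p$j)"
proof (rule dp_local[OF assms])
  show "Hstar \<sigma> h t x q = 4 * exp (-2 * \<sigma> x) * h t * sqrt (PP q)" for q by (rule Hstar_PP)
  have nz: "p$j \<noteq> 0" using PP_nz[OF assms] .
  show "((\<lambda>s. 4 * exp (-2 * \<sigma> x) * h t * sqrt (PP (p + s *\<^sub>R axis j 1))) has_real_derivative
        4 * exp (-2 * \<sigma> x) * h t * sqrt (PP p) / (2 * p$j)) (at 0)"
    unfolding PP_line[OF nz]
    using assms nz
    by (auto intro!: derivative_eq_intros simp: field_simps)
qed

lemma F2:
  assumes "PP p > 0"
  shows "d_p i (d_p j (Hstar \<sigma> h)) t x p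
       = 4 * exp (-2 * \<sigma> x) * h t * sqrt (PP p) * (1 - 2 * kdelta i j) / (4 * p$i * p$j)"
proof (rule dp_local[OF assms])
  show "d_p j (Hstar \<sigma> h) t x q = 4 * exp (-2 * \<sigma> x) * h t * sqrt (PP q) / (2 * q$j)" if "PP q > 0" for q
    by (rule F1[OF that])
  have nz: "p$i \<noteq> 0" "p$j \<noteq> 0" using PP_nz[OF assms] by auto
  show "((\<lambda>s. 4 * exp (-2 * \<sigma> x) * h t * sqrt (PP (p + s *\<^sub>R axis i 1)) / (2 * (p + s *\<^sub>R axis i 1)$j))
      has_real_derivative
        4 * exp (-2 * \<sigma> x) * h t * sqrt (PP p) * (1 - 2 * kdelta i j) / (4 * p$i * p$j)) (at 0)"
    unfolding PP_line[OF nz(1)] axis_comp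
  proof (cases "i = j")
    case True
    then show "((\<lambda>s. 4 * exp (-2 * \<sigma> x) * h t * sqrt (PP p * (1 + s / p$i)) / (2 * (p$j + s * kdelta j i)))
      has_real_derivative
        4 * exp (-2 * \<sigma> x) * h t * sqrt (PP p) * (1 - 2 * kdelta i j) / (4 * p$i * p$j)) (at 0)"
      using assms nz by (auto intro!: derivative_eq_intros simp: kdelta_def field_simps power2_eq_square)
  next
    case False
    then show "((\<lambda>s. 4 * exp (-2 * \<sigma> x) * h t * sqrt (PP p * (1 + s / p$i)) / (2 * (p$j + s * kdelta j i)))
      has_real_derivative
        4 * exp (-2 * \<sigma> x) * h t * sqrt (PP p) * (1 - 2 * kdelta i j) / (4 * p$i * p$j)) (at 0)"
      using assms nz by (auto intro!: derivative_eq_intros simp: kdelta_def field_simps)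
  qed
qed

definition GU :: "(real^4 \<Rightarrow> real) \<Rightarrow> real^4 \<Rightarrow> real^4 \<Rightarrow> real^4^4" where
  "GU \<sigma> x p = (\<chi> i j. exp (-2 * \<sigma> x) * sqrt (PP p) * (1 - 2 * kdelta i j) / (2 * p$i * p$j))"
definition GD :: "(real^4 \<Rightarrow> real) \<Rightarrow> real^4 \<Rightarrow> real^4 \<Rightarrow> real^4^4" where
  "GD \<sigma> x p = (\<chi> i j. exp (2 * \<sigma> x) * p$i * p$j * (1 - 2 * kdelta i j) / (2 * sqrt (PP p)))"

lemma F3:
  assumes "PP p > 0" "h t > 0"
  shows "g_up h (Hstar \<sigma> h) t x p = GU \<sigma> x p"
  unfolding g_up_def GU_def vec_eq_iff using assms PP_nz[OF assms(1)]
  by (simp add: F2 field_simps)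

lemma UD:
  assumes "PP p > 0"
  shows "GU \<sigma> x p $i$r * GD \<sigma> x p $j$s = (1 - 2 * kdelta i r) * (1 - 2 * kdelta j s) * p$j * p$s / (4 * p$i * p$r)"
  using assms PP_nz[OF assms]
  by (simp add: GU_def GD_def field_simps exp_minus)


lemma DU:
  assumes "PP p > 0"
  shows "GD \<sigma> x p $i$r * GU \<sigma> x p $j$s = (1 - 2 * kdelta i r) * (1 - 2 * kdelta j s) * p$i * p$r / (4 * p$j * p$s)"
  using assms PP_nz[OF assms]
  by (simp add: GU_def GD_def field_simps exp_minus)

lemma inv_unique:
  fixes A B :: "real^4^4"
  assumes "A ** B = mat 1" "B ** A = mat 1"
  shows "matrix_inv A = B"
  unfolding matrix_inv_def
proof (rule some_equality)
  show "A ** B = mat 1 \<and> B ** A = mat 1" using assms by simp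
  fix C assume "A ** C = mat 1 \<and> C ** A = mat 1"
  then have "C = C ** (A ** B)" "C ** A = mat 1" by (simp_all add: assms)
  then show "C = B" by (simp add: matrix_mul_assoc)
qed

lemma PP_nz4: "PP p > 0 \<Longrightarrow> p$1 \<noteq> 0 \<and> p$2 \<noteq> 0 \<and> p$3 \<noteq> 0 \<and> p$4 \<noteq> 0"
  using PP_nz by blast

lemma F4:
  assumes "PP p > 0" "h t > 0"
  shows "g_dn h (Hstar \<sigma> h) t x p = GD \<sigma> x p"
proof -
  note nz = PP_nz4[OF assms(1)]
  have 1: "GU \<sigma> x p ** GD \<sigma> x p = mat 1"
  proof -
    have "(GU \<sigma> x p ** GD \<sigma> x p) $ i $ j = (\<Sum>r\<in>UNIV. (1 - 2 * kdelta i r) * (1 - 2 * kdelta r j) * p$r * p$j / (4 * p$i * p$r))" for i j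
      unfolding matrix_matrix_mult_def by (simp add: UD[OF assms(1)])
    then show ?thesis unfolding vec_eq_iff mat_def
      using nz by (simp add: sum_4 forall_4 kdelta_def field_simps)
  qed
  have 2: "GD \<sigma> x p ** GU \<sigma> x p = mat 1"
  proof -
    have "(GD \<sigma> x p ** GU \<sigma> x p) $ i $ j = (\<Sum>r\<in>UNIV. (1 - 2 * kdelta i r) * (1 - 2 * kdelta r j) * p$i * p$r / (4 * p$r * p$j))" for i j
      unfolding matrix_matrix_mult_def by (simp add: DU[OF assms(1)])
    then show ?thesis unfolding vec_eq_iff mat_def
      using nz by (simp add: sum_4 forall_4 kdelta_def field_simps)
  qed
  show ?thesis unfolding g_dn_def F3[of p h t, OF assms] by (rule inv_unique[OF 1 2])
qed


lemma F5:
  assumes "PP p > 0" "\<forall>t. h t > 0"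
  shows "d_p k (\<lambda>t' x' p'. g_up h (Hstar \<sigma> h) t' x' p' $ j $ r) t x p
       = GU \<sigma> x p $ j $ r * (1/2 - kdelta j k - kdelta r k) / p$k"
proof (rule dp_local[OF assms(1)])
  show "g_up h (Hstar \<sigma> h) t x q $ j $ r = GU \<sigma> x q $ j $ r" if "PP q > 0" for q
    using F3[of q h t] that assms(2) by simp
  have nz: "p$k \<noteq> 0" "p$j \<noteq> 0" "p$r \<noteq> 0" using PP_nz[OF assms(1)] by auto
  show "((\<lambda>s. GU \<sigma> x (p + s *\<^sub>R axis k 1) $ j $ r) has_real_derivative
      GU \<sigma> x p $ j $ r * (1/2 - kdelta j k - kdelta r k) / p$k) (at 0)"
    unfolding GU_def vec_lambda_beta PP_line[OF nz(1)] axis_comp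
    using nz assms(1)
    by (cases "j = k"; cases "r = k")
       (auto intro!: derivative_eq_intros simp: kdelta_def field_simps power2_eq_square)
qed

lemma F6:
  assumes "PP p > 0" "\<forall>t. h t > 0"
  shows "d_p k (\<lambda>t' x' p'. g_dn h (Hstar \<sigma> h) t' x' p' $ i $ j) t x p
       = GD \<sigma> x p $ i $ j * (kdelta i k + kdelta j k - 1/2) / p$k"
proof (rule dp_local[OF assms(1)])
  show "g_dn h (Hstar \<sigma> h) t x q $ i $ j = GD \<sigma> x q $ i $ j" if "PP q > 0" for q
    using F4[of q h t] that assms(2) by simp
  have nz: "p$k \<noteq> 0" "p$i \<noteq> 0" "p$j \<noteq> 0" using PP_nz[OF assms(1)] by auto
  show "((\<lambda>s. GD \<sigma> x (p + s *\<^sub>R axis k 1) $ i $ j) has_real_derivative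
      GD \<sigma> x p $ i $ j * (kdelta i k + kdelta j k - 1/2) / p$k) (at 0)"
    unfolding GD_def vec_lambda_beta PP_line[OF nz(1)] axis_comp
    using nz assms(1)
    by (cases "i = k"; cases "j = k")
       (auto intro!: derivative_eq_intros simp: kdelta_def field_simps power2_eq_square)
qed

lemma F8:
  assumes "PP p > 0" "\<forall>t. h t > 0"
  shows "d_t (\<lambda>t' x' p'. g_dn h (Hstar \<sigma> h) t' x' p' $ i $ j) t x p = 0"
proof -
  have "(\<lambda>s. g_dn h (Hstar \<sigma> h) s x p $ i $ j) = (\<lambda>s. GD \<sigma> x p $ i $ j)"
    using F4[of p h] assms by auto
  then show ?thesis unfolding d_t_def by simp
qed

lemma F7:
  assumes "PP p > 0" "\<forall>t. h t > 0" "\<sigma> differentiable (at x)"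
  shows "d_x k (\<lambda>t' x' p'. g_dn h (Hstar \<sigma> h) t' x' p' $ i $ j) t x p
       = 2 * pdiff k \<sigma> x * GD \<sigma> x p $ i $ j"
proof -
  have e: "(\<lambda>s. g_dn h (Hstar \<sigma> h) t (x + s *\<^sub>R axis k 1) p $ i $ j)
      = (\<lambda>s. exp (2 * \<sigma> (x + s *\<^sub>R axis k 1)) * (p$i * p$j * (1 - 2 * kdelta i j) / (2 * sqrt (PP p))))"
    using F4[of p h t] assms by (auto simp: GD_def)
  have "(\<lambda>s. \<sigma> (x + s *\<^sub>R axis k 1)) differentiable (at 0)"
  proof -
    have "(\<lambda>s::real. x + s *\<^sub>R axis k 1) differentiable (at 0)" by (intro derivative_intros)
    moreover have "\<sigma> differentiable (at ((\<lambda>s::real. x + s *\<^sub>R axis k 1) 0))" using assms(3) by simp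
    ultimately show ?thesis using differentiable_chain_at[of "\<lambda>s::real. x + s *\<^sub>R axis k 1" 0 \<sigma>]
      by (simp add: o_def)
  qed
  then have ds: "((\<lambda>s. \<sigma> (x + s *\<^sub>R axis k 1)) has_real_derivative pdiff k \<sigma> x) (at 0)"
    unfolding pdiff_def by (simp add: DERIV_deriv_iff_real_differentiable)
  have "((\<lambda>s. exp (2 * \<sigma> (x + s *\<^sub>R axis k 1)) * (p$i * p$j * (1 - 2 * kdelta i j) / (2 * sqrt (PP p))))
      has_real_derivative 2 * pdiff k \<sigma> x * GD \<sigma> x p $ i $ j) (at 0)"
  proof -
    define c where "c = p$i * p$j * (1 - 2 * kdelta i j) / (2 * sqrt (PP p))"
    have "GD \<sigma> x p $ i $ j = exp (2 * \<sigma> x) * c" by (simp add: GD_def c_def)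
    then show ?thesis unfolding c_def[symmetric]
      by (auto intro!: derivative_eq_intros ds)
  qed
  then show ?thesis unfolding d_x_def e by (rule DERIV_imp_deriv)
qed


abbreviation AA :: "4 \<Rightarrow> 4 \<Rightarrow> real" where "AA a b \<equiv> 1 - 2 * kdelta a b"

lemma Hnum:
  fixes q :: "real^4" and s :: "4 \<Rightarrow> real"
  assumes "q$1 \<noteq> 0 \<and> q$2 \<noteq> 0 \<and> q$3 \<noteq> 0 \<and> q$4 \<noteq> 0"
  shows "(\<Sum>r\<in>UNIV. 2 * s k * (AA i r * AA j r * q$j * q$r / (4 * q$i * q$r)) * (kdelta j k + kdelta r k)
          + 2 * s j * (AA i r * AA k r * q$k * q$r / (4 * q$i * q$r)) * (kdelta k j + kdelta r j)
          - 2 * s r * (AA i r * AA j k * q$j * q$k / (4 * q$i * q$r)) * (kdelta j r + kdelta k r))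
       = 4 * kdelta i j * kdelta i k * s i"
  using assms exhaust_4[of i] exhaust_4[of j] exhaust_4[of k]
  by (auto simp: sum_4 kdelta_def field_simps)

lemma Cnum:
  fixes q :: "real^4"
  assumes "q$1 \<noteq> 0 \<and> q$2 \<noteq> 0 \<and> q$3 \<noteq> 0 \<and> q$4 \<noteq> 0"
  shows "- (\<Sum>r\<in>UNIV. 1/2 * ((AA i r * AA j r * q$i * q$r / (4 * q$j * q$r)) * (1/2 - kdelta j k - kdelta r k) / q$k
          + (AA i r * AA k r * q$i * q$r / (4 * q$k * q$r)) * (1/2 - kdelta k j - kdelta r j) / q$j
          - (AA i r * AA j k * q$i * q$r / (4 * q$j * q$k)) * (1/2 - kdelta j r - kdelta k r) / q$r))
       = Cconst i j k * q$i / (q$j * q$k)"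
  using assms exhaust_4[of i] exhaust_4[of j] exhaust_4[of k]
  by (auto simp: sum_4 kdelta_def Cconst_def field_simps)


lemma DX:
  assumes "PP p > 0" "\<forall>t. h t > 0" "\<sigma> differentiable (at x)"
  shows "delta_x \<sigma> k (\<lambda>t' x' p'. g_dn h (Hstar \<sigma> h) t' x' p' $ j $ r) t x p
       = 4 * pdiff k \<sigma> x * GD \<sigma> x p $ j $ r * (kdelta j k + kdelta r k)"
  unfolding delta_x_def F7[OF assms] F6[OF assms(1,2)]
  using PP_nz[OF assms(1), of k] by (simp add: field_simps)

lemma DT:
  assumes "PP p > 0" "\<forall>t. h t > 0"
  shows "delta_t h (\<lambda>t' x' p'. g_dn h (Hstar \<sigma> h) t' x' p' $ l $ j) t x p = 0"
  unfolding delta_t_def F8[OF assms] F6[OF assms]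
  using PP_nz4[OF assms(1)] exhaust_4[of l] exhaust_4[of j]
  by (auto simp: sum_4 kdelta_def field_simps)

lemma partH:
  assumes "PP p > 0" "\<forall>t. h t > 0" "\<sigma> differentiable (at x)"
  shows "cartan_H \<sigma> h (Hstar \<sigma> h) i j k t x p = 4 * kdelta i j * kdelta i k * pdiff i \<sigma> x"
proof -
  have "cartan_H \<sigma> h (Hstar \<sigma> h) i j k t x p =
     (\<Sum>r\<in>UNIV. 2 * pdiff k \<sigma> x * (AA i r * AA j r * p$j * p$r / (4 * p$i * p$r)) * (kdelta j k + kdelta r k)
          + 2 * pdiff j \<sigma> x * (AA i r * AA k r * p$k * p$r / (4 * p$i * p$r)) * (kdelta k j + kdelta r j)
          - 2 * pdiff r \<sigma> x * (AA i r * AA j k * p$j * p$k / (4 * p$i * p$r)) * (kdelta j r + kdelta k r))"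
    unfolding cartan_H_def DX[OF assms] F3[of p h t, OF assms(1) spec[OF assms(2)]]
    apply (rule sum.cong[OF refl])
    using PP_nz[OF assms(1)] assms(1)
    by (simp add: GU_def GD_def field_simps exp_minus)
  also have "\<dots> = 4 * kdelta i j * kdelta i k * pdiff i \<sigma> x"
    by (rule Hnum[OF PP_nz4[OF assms(1)], of "\<lambda>m. pdiff m \<sigma> x"])
  finally show ?thesis .
qed

lemma partC:
  assumes "PP p > 0" "\<forall>t. h t > 0"
  shows "cartan_C h (Hstar \<sigma> h) i j k t x p = Cconst i j k * p$i / (p$j * p$k)"
proof -
  have "cartan_C h (Hstar \<sigma> h) i j k t x p =
     - (\<Sum>r\<in>UNIV. 1/2 * ((AA i r * AA j r * p$i * p$r / (4 * p$j * p$r)) * (1/2 - kdelta j k - kdelta r k) / p$k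
          + (AA i r * AA k r * p$i * p$r / (4 * p$k * p$r)) * (1/2 - kdelta k j - kdelta r j) / p$j
          - (AA i r * AA j k * p$i * p$r / (4 * p$j * p$k)) * (1/2 - kdelta j r - kdelta k r) / p$r))"
    unfolding cartan_C_def F5[OF assms] F4[of p h t, OF assms(1) spec[OF assms(2)]]
    apply (rule arg_cong[where f=uminus])
    apply (rule sum.cong[OF refl])
    using PP_nz[OF assms(1)] assms(1)
    by (simp add: GU_def GD_def field_simps exp_minus)
  also have "\<dots> = Cconst i j k * p$i / (p$j * p$k)"
    by (rule Cnum[OF PP_nz4[OF assms(1)]])
  finally show ?thesis .
qed

theorem mainTheorem2:
  fixes \<sigma> :: "real^4 \<Rightarrow> real" and h :: "real \<Rightarrow> real" and U :: "(real^4) set"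
  assumes "open U"
    and "smooth_on U \<sigma>"
    and "\<not> (\<exists>c. \<forall>x\<in>U. \<sigma> x = c)"
    and "smooth_real h"
    and "\<forall>t. h t > 0"
  shows "\<forall>t x p. x \<in> U \<and> p$1 * p$2 * p$3 * p$4 > 0 \<longrightarrow>
           (\<forall>i j. cartan_A \<sigma> h (Hstar \<sigma> h) i j t x p = 0)
         \<and> (\<forall>i j k. cartan_H \<sigma> h (Hstar \<sigma> h) i j k t x p
                    = 4 * kdelta i j * kdelta i k * pdiff i \<sigma> x)
         \<and> (\<forall>i j k. cartan_C h (Hstar \<sigma> h) i j k t x p
                    = Cconst i j k * p$i / (p$j * p$k))"
proof (intro allI impI)
  fix t :: real and x p :: "real^4" assume a: "x \<in> U \<and> p$1 * p$2 * p$3 * p$4 > 0"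
  then have P: "PP p > 0" by (simp add: PP_def)
  have "\<sigma> differentiable_on U" using assms(2) unfolding smooth_on_def
    by (metis fold_Nil id_apply)
  then have d: "\<sigma> differentiable (at x)"
    using differentiable_on_eq_differentiable_at[OF assms(1)] a by blast
  show "(\<forall>i j. cartan_A \<sigma> h (Hstar \<sigma> h) i j t x p = 0)
         \<and> (\<forall>i j k. cartan_H \<sigma> h (Hstar \<sigma> h) i j k t x p
                    = 4 * kdelta i j * kdelta i k * pdiff i \<sigma> x)
         \<and> (\<forall>i j k. cartan_C h (Hstar \<sigma> h) i j k t x p
                    = Cconst i j k * p$i / (p$j * p$k))"
    using partH[OF P assms(5) d] partC[OF P assms(5)] DT[OF P assms(5)]
    by (simp add: cartan_A_def)
qed

end
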